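(* Let ${\bf D}$ be an $L\times N$ complex matrix with $L=Rd$, $N=Md$, whose columns have unit Euclidean norm, partitioned into consecutive column-blocks ${\bf D}[1],\dots,{\bf D}[M]$ of size $L\times d$, and assume ${\bf D}{\bf g}\neq{\bf 0}$ for every nonzero block $2k$-sparse ${\bf g}\in\mathbb{C}^N$. Let $\mu_{\mathrm B}>0$ be the block-coherence and $\nu$ the sub-coherence of ${\bf D}$. If $$kd<\frac12\left(\mu_{\mathrm B}^{-1}+d-(d-1)\frac{\nu}{\mu_{\mathrm B}}\right),$$ then for every set $\Lambda_0$ of $k$ block indices, letting ${\bf D}_0$ be the $L\times(kd)$ matrix formed by the blocks ${\bf D}[\ell]$, $\ell\in\Lambda_0$, and $\overline{{\bf D}}_0$ the matrix formed by the remaining blocks, we have $\rho_c({\bf D}_0^\dagger\overline{{\bf D}}_0)<1$.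
   Context: $\rho(\cdot)$ is the spectral norm, ${\bf A}^\dagger$ the Moore–Penrose pseudo-inverse. Block-coherence: $\mu_{\mathrm B}=\max_{\ell, r\neq\ell}\frac1d\rho({\bf D}^H[\ell]{\bf D}[r])$. Sub-coherence: $\nu=\max_\ell\max_{i,j\neq i}|{\bf d}_i^H{\bf d}_j|$ with ${\bf d}_i,{\bf d}_j$ columns of the same block ${\bf D}[\ell]$ ($\nu=0$ if $d=1$). For a matrix ${\bf A}$ whose dimensions are multiples of $d$, with $(\ell,r)$th $d\times d$ block ${\bf A}[\ell,r]$, $\rho_c({\bf A})=\max_r\sum_\ell\rho({\bf A}[\ell,r])$. A vector in $\mathbb{C}^N$ is block $2k$-sparse if at most $2k$ of its consecutive length-$d$ blocks are nonzero. *)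

theory Defs
  imports "HOL-Analysis.Analysis"
begin

text \<open>Matrices are represented as functions nat => nat => complex together with
explicit dimensions (an m x n matrix only uses entries (i,j) with i<m, j<n);
vectors of length n are functions nat => complex using indices < n.
All indices (rows, columns, blocks) are 0-based.\<close>

definition vnorm :: "nat \<Rightarrow> (nat \<Rightarrow> complex) \<Rightarrow> real" where
  "vnorm n x = sqrt (\<Sum>i<n. (cmod (x i))\<^sup>2)"

definition matvec :: "nat \<Rightarrow> (nat \<Rightarrow> nat \<Rightarrow> complex) \<Rightarrow> (nat \<Rightarrow> complex) \<Rightarrow> (nat \<Rightarrow> complex)" where
  "matvec n A x = (\<lambda>i. \<Sum>j<n. A i j * x j)"

definition matmul :: "(nat \<Rightarrow> nat \<Rightarrow> complex) \<Rightarrow> nat \<Rightarrow> (nat \<Rightarrow> nat \<Rightarrow> complex) \<Rightarrow> (nat \<Rightarrow> nat \<Rightarrow> complex)" where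
  "matmul A p B = (\<lambda>i j. \<Sum>l<p. A i l * B l j)"

definition adj :: "(nat \<Rightarrow> nat \<Rightarrow> complex) \<Rightarrow> (nat \<Rightarrow> nat \<Rightarrow> complex)" where
  "adj A = (\<lambda>i j. cnj (A j i))"

definition mat_eq :: "nat \<Rightarrow> nat \<Rightarrow> (nat \<Rightarrow> nat \<Rightarrow> complex) \<Rightarrow> (nat \<Rightarrow> nat \<Rightarrow> complex) \<Rightarrow> bool" where
  "mat_eq m n A B \<longleftrightarrow> (\<forall>i<m. \<forall>j<n. A i j = B i j)"

definition spec_norm :: "nat \<Rightarrow> nat \<Rightarrow> (nat \<Rightarrow> nat \<Rightarrow> complex) \<Rightarrow> real" where
  "spec_norm m n A = Sup {vnorm m (matvec n A x) | x. vnorm n x \<le> 1}"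

definition pinv :: "nat \<Rightarrow> nat \<Rightarrow> (nat \<Rightarrow> nat \<Rightarrow> complex) \<Rightarrow> (nat \<Rightarrow> nat \<Rightarrow> complex)" where
  "pinv m n A = (THE X. (\<forall>i j. \<not> (i < n \<and> j < m) \<longrightarrow> X i j = 0)
      \<and> mat_eq m n (matmul (matmul A n X) m A) A
      \<and> mat_eq n m (matmul (matmul X m A) n X) X
      \<and> mat_eq m m (adj (matmul A n X)) (matmul A n X)
      \<and> mat_eq n n (adj (matmul X m A)) (matmul X m A))"

definition blk :: "nat \<Rightarrow> (nat \<Rightarrow> nat \<Rightarrow> complex) \<Rightarrow> nat \<Rightarrow> (nat \<Rightarrow> nat \<Rightarrow> complex)" where
  "blk d D l = (\<lambda>i j. D i (l * d + j))"

definition subblock :: "nat \<Rightarrow> (nat \<Rightarrow> nat \<Rightarrow> complex) \<Rightarrow> nat \<Rightarrow> nat \<Rightarrow> (nat \<Rightarrow> nat \<Rightarrow> complex)" where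
  "subblock d A l r = (\<lambda>i j. A (l * d + i) (r * d + j))"

definition block_coherence :: "nat \<Rightarrow> nat \<Rightarrow> nat \<Rightarrow> (nat \<Rightarrow> nat \<Rightarrow> complex) \<Rightarrow> real" where
  "block_coherence L M d D = Max (insert 0
     {spec_norm d d (matmul (adj (blk d D l)) L (blk d D r)) / real d | l r. l < M \<and> r < M \<and> r \<noteq> l})"

definition sub_coherence :: "nat \<Rightarrow> nat \<Rightarrow> nat \<Rightarrow> (nat \<Rightarrow> nat \<Rightarrow> complex) \<Rightarrow> real" where
  "sub_coherence L M d D = Max (insert 0
     {cmod (\<Sum>i<L. cnj (D i (l * d + a)) * D i (l * d + b)) | l a b. l < M \<and> a < d \<and> b < d \<and> b \<noteq> a})"

definition rho_c :: "nat \<Rightarrow> nat \<Rightarrow> nat \<Rightarrow> (nat \<Rightarrow> nat \<Rightarrow> complex) \<Rightarrow> real" where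
  "rho_c p q d A = Max (insert 0 {(\<Sum>l<p. spec_norm d d (subblock d A l r)) | r. r < q})"

definition block_sparse :: "nat \<Rightarrow> nat \<Rightarrow> nat \<Rightarrow> (nat \<Rightarrow> complex) \<Rightarrow> bool" where
  "block_sparse M d s g \<longleftrightarrow> card {l. l < M \<and> (\<exists>t<d. g (l * d + t) \<noteq> 0)} \<le> s"

definition sel_blocks :: "nat \<Rightarrow> (nat \<Rightarrow> nat \<Rightarrow> complex) \<Rightarrow> nat list \<Rightarrow> (nat \<Rightarrow> nat \<Rightarrow> complex)" where
  "sel_blocks d D ls = (\<lambda>i j. D i ((ls ! (j div d)) * d + j mod d))"

end

theory Submission
  imports Defs "Jordan_Normal_Form.Determinant"
begin


lemma vnorm_L2: "vnorm n x = L2_set (\<lambda>i. cmod (x i)) {..<n}"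
  by (simp add: vnorm_def L2_set_def)

lemma vnorm_nonneg: "0 \<le> vnorm n x"
  by (simp add: vnorm_L2)

lemma vnorm_cong: "(\<And>i. i<n \<Longrightarrow> x i = y i) \<Longrightarrow> vnorm n x = vnorm n y"
  unfolding vnorm_def by (intro arg_cong[where f=sqrt] sum.cong) auto

lemma vnorm_add: "vnorm n (\<lambda>i. x i + y i) \<le> vnorm n x + vnorm n y"
proof -
  have "vnorm n (\<lambda>i. x i + y i) \<le> L2_set (\<lambda>i. cmod (x i) + cmod (y i)) {..<n}"
    unfolding vnorm_L2 by (rule L2_set_mono) (auto simp: norm_triangle_ineq)
  also have "\<dots> \<le> vnorm n x + vnorm n y"
    unfolding vnorm_L2 by (rule L2_set_triangle_ineq)
  finally show ?thesis .
qed

lemma vnorm_diff: "vnorm n (\<lambda>i. x i - y i) \<le> vnorm n x + vnorm n y"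
proof -
  have "vnorm n (\<lambda>i. x i - y i) \<le> L2_set (\<lambda>i. cmod (x i) + cmod (y i)) {..<n}"
    unfolding vnorm_L2 by (rule L2_set_mono) (auto simp: norm_triangle_ineq4)
  also have "\<dots> \<le> vnorm n x + vnorm n y"
    unfolding vnorm_L2 by (rule L2_set_triangle_ineq)
  finally show ?thesis .
qed

lemma vnorm_zero_vec: "vnorm n (\<lambda>i. 0) = 0"
  by (simp add: vnorm_def)

lemma vnorm_sum: "finite S \<Longrightarrow> vnorm n (\<lambda>i. \<Sum>m\<in>S. f m i) \<le> (\<Sum>m\<in>S. vnorm n (f m))"
proof (induction S rule: finite_induct)
  case empty
  then show ?case by (simp add: vnorm_zero_vec)
next
  case (insert a S)
  have "vnorm n (\<lambda>i. \<Sum>m\<in>insert a S. f m i) = vnorm n (\<lambda>i. f a i + (\<Sum>m\<in>S. f m i))"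
    using insert by simp
  also have "\<dots> \<le> vnorm n (f a) + vnorm n (\<lambda>i. \<Sum>m\<in>S. f m i)"
    by (rule vnorm_add)
  also have "\<dots> \<le> vnorm n (f a) + (\<Sum>m\<in>S. vnorm n (f m))"
    using insert by simp
  finally show ?case using insert by simp
qed

lemma vnorm_scale: "vnorm n (\<lambda>i. c * x i) = cmod c * vnorm n x"
  unfolding vnorm_L2 by (simp add: L2_set_right_distrib norm_mult)

lemma vnorm_eq_0: "vnorm n x = 0 \<longleftrightarrow> (\<forall>i<n. x i = 0)"
  unfolding vnorm_L2 by (auto simp: L2_set_eq_0_iff)

lemma vnorm_sq: "(vnorm n x)\<^sup>2 = (\<Sum>i<n. (cmod (x i))\<^sup>2)"
  unfolding vnorm_def by (simp add: sum_nonneg)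

lemma matvec_entry_bound:
  "(cmod (matvec n A x i))\<^sup>2 \<le> (\<Sum>j<n. (cmod (A i j))\<^sup>2) * (vnorm n x)\<^sup>2"
proof -
  have "cmod (matvec n A x i) \<le> (\<Sum>j<n. \<bar>cmod (A i j)\<bar> * \<bar>cmod (x j)\<bar>)"
    unfolding matvec_def by (rule order_trans[OF norm_sum]) (simp add: norm_mult)
  also have "\<dots> \<le> L2_set (\<lambda>j. cmod (A i j)) {..<n} * vnorm n x"
    unfolding vnorm_L2 by (rule L2_set_mult_ineq)
  finally have h: "cmod (matvec n A x i) \<le> L2_set (\<lambda>j. cmod (A i j)) {..<n} * vnorm n x" .
  have "(cmod (matvec n A x i))\<^sup>2 \<le> (L2_set (\<lambda>j. cmod (A i j)) {..<n} * vnorm n x)\<^sup>2"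
    by (rule power_mono[OF h]) simp
  also have "\<dots> = (\<Sum>j<n. (cmod (A i j))\<^sup>2) * (vnorm n x)\<^sup>2"
    by (simp add: power_mult_distrib L2_set_def sum_nonneg)
  finally show ?thesis .
qed

lemma matvec_bound:
  "vnorm m (matvec n A x) \<le> sqrt (\<Sum>i<m. \<Sum>j<n. (cmod (A i j))\<^sup>2) * vnorm n x"
proof -
  have "vnorm m (matvec n A x) \<le> sqrt (\<Sum>i<m. (\<Sum>j<n. (cmod (A i j))\<^sup>2) * (vnorm n x)\<^sup>2)"
    unfolding vnorm_def[of m] by (intro real_sqrt_le_mono sum_mono matvec_entry_bound)
  also have "\<dots> = sqrt (\<Sum>i<m. \<Sum>j<n. (cmod (A i j))\<^sup>2) * vnorm n x"
    by (simp add: sum_distrib_right[symmetric] real_sqrt_mult vnorm_nonneg)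
  finally show ?thesis .
qed

definition SNset :: "nat \<Rightarrow> nat \<Rightarrow> (nat \<Rightarrow> nat \<Rightarrow> complex) \<Rightarrow> real set" where
  "SNset m n A = {vnorm m (matvec n A x) | x. vnorm n x \<le> 1}"

lemma spec_norm_SN: "spec_norm m n A = Sup (SNset m n A)"
  by (simp add: spec_norm_def SNset_def)

lemma SN_bdd: "bdd_above (SNset m n A)"
proof
  fix y assume "y \<in> SNset m n A"
  then obtain x where y: "y = vnorm m (matvec n A x)" and x: "vnorm n x \<le> 1"
    unfolding SNset_def by auto
  have "y \<le> sqrt (\<Sum>i<m. \<Sum>j<n. (cmod (A i j))\<^sup>2) * vnorm n x"
    using y matvec_bound by simp
  also have "\<dots> \<le> sqrt (\<Sum>i<m. \<Sum>j<n. (cmod (A i j))\<^sup>2) * 1"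
    by (intro mult_left_mono x) (simp add: sum_nonneg)
  finally show "y \<le> sqrt (\<Sum>i<m. \<Sum>j<n. (cmod (A i j))\<^sup>2)" by simp
qed

lemma SN_ne: "vnorm m (matvec n A (\<lambda>_. 0)) \<in> SNset m n A"
  unfolding SNset_def by (auto simp: vnorm_zero_vec)

lemma spec_ge: "vnorm n x \<le> 1 \<Longrightarrow> vnorm m (matvec n A x) \<le> spec_norm m n A"
  unfolding spec_norm_SN by (rule cSup_upper[OF _ SN_bdd]) (auto simp: SNset_def)

lemma matvec_zero: "matvec n A (\<lambda>_. 0) = (\<lambda>_. 0)"
  by (simp add: matvec_def)

lemma spec_nonneg: "0 \<le> spec_norm m n A"
  using spec_ge[of n "\<lambda>_. 0" m A] by (simp add: vnorm_zero_vec matvec_zero)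

lemma matvec_scale: "matvec n A (\<lambda>j. c * x j) = (\<lambda>i. c * matvec n A x i)"
  by (simp add: matvec_def sum_distrib_left algebra_simps)

lemma matvec_cong: "(\<And>j. j<n \<Longrightarrow> x j = y j) \<Longrightarrow> matvec n A x = matvec n A y"
  unfolding matvec_def by (intro ext sum.cong) auto

lemma spec_apply: "vnorm m (matvec n A x) \<le> spec_norm m n A * vnorm n x"
proof (cases "vnorm n x = 0")
  case True
  then have "matvec n A x = matvec n A (\<lambda>_. 0)"
    by (intro matvec_cong) (auto simp: vnorm_eq_0)
  then show ?thesis using True by (simp add: matvec_zero vnorm_zero_vec)
next
  case False
  define c where "c = vnorm n x"
  have c: "c > 0" using False vnorm_nonneg[of n x] by (simp add: c_def)
  define y where "y = (\<lambda>j. complex_of_real (1/c) * x j)"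
  have "vnorm n y = cmod (complex_of_real (1/c)) * c" unfolding y_def vnorm_scale c_def ..
  then have "vnorm n y = 1" using c by (simp add: norm_divide)
  then have "vnorm m (matvec n A y) \<le> spec_norm m n A" by (intro spec_ge) simp
  moreover have "vnorm m (matvec n A y) = cmod (complex_of_real (1/c)) * vnorm m (matvec n A x)"
    unfolding y_def matvec_scale vnorm_scale ..
  then have "vnorm m (matvec n A y) = vnorm m (matvec n A x) / c"
    using c by (simp add: norm_divide)
  ultimately show ?thesis using c by (simp add: c_def field_simps)
qed

lemma spec_least:
  assumes "\<And>x. vnorm m (matvec n A x) \<le> C * vnorm n x" "0 \<le> C"
  shows "spec_norm m n A \<le> C"
  unfolding spec_norm_SN
proof (rule cSup_least)
  show "SNset m n A \<noteq> {}" using SN_ne by blast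
  fix y assume "y \<in> SNset m n A"
  then obtain x where y: "y = vnorm m (matvec n A x)" and x: "vnorm n x \<le> 1"
    unfolding SNset_def by auto
  have "y \<le> C * vnorm n x" using assms y by simp
  also have "\<dots> \<le> C * 1" by (intro mult_left_mono x assms)
  finally show "y \<le> C" by simp
qed

lemma spec_cong:
  assumes "\<And>i j. i<m \<Longrightarrow> j<n \<Longrightarrow> A i j = B i j"
  shows "spec_norm m n A = spec_norm m n B"
proof -
  have "\<And>x. vnorm m (matvec n A x) = vnorm m (matvec n B x)"
    by (intro vnorm_cong) (auto simp: matvec_def assms intro!: sum.cong)
  then show ?thesis by (simp add: spec_norm_def)
qed



lemma sum_blocks: "(\<Sum>j<(k::nat)*d. f j) = (\<Sum>m<k. \<Sum>t<d. f (m*d+t)) "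
proof (induction k)
  case 0 then show ?case by simp
next
  case (Suc k)
  have "{..<Suc k * d} = {..<k*d} \<union> {k*d..<k*d+d}" by auto
  then have "(\<Sum>j<Suc k*d. f j) = (\<Sum>j<k*d. f j) + (\<Sum>j\<in>{k*d..<k*d+d}. f j)"
    by (simp add: sum.union_disjoint[symmetric] ivl_disj_int)
  also have "(\<Sum>j\<in>{k*d..<k*d+d}. f j) = (\<Sum>t<d. f (k*d+t))"
    by (rule sum.reindex_bij_witness[of _ "\<lambda>j. k*d+j" "\<lambda>j. j - k*d"]) auto
  finally show ?case using Suc by simp
qed

lemma idx_lt: "l < k \<Longrightarrow> i < (d::nat) \<Longrightarrow> l*d+i < k*d"
proof -
  assume "l < k" "i < d"
  then have "l*d + i < l*d + d" by simp
  also have "\<dots> = Suc l * d" by simp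
  also have "\<dots> \<le> k * d" using \<open>l<k\<close> by (intro mult_right_mono) auto
  finally show ?thesis .
qed

lemma matvec_matmul: "matvec p (matmul A n B) x i = matvec n A (matvec p B x) i"
  unfolding matvec_def matmul_def
  by (simp add: sum_distrib_left sum_distrib_right mult.assoc sum.swap[of _ "{..<n}"])

lemma matmul_blocks:
  "matmul E (k*d) Z (l*d+i) (r*d+j) = (\<Sum>m<k. matmul (subblock d E l m) d (subblock d Z m r) i j)"
  unfolding matmul_def subblock_def by (rule sum_blocks)

lemma sum_swap_mult: "(\<Sum>j<d. (\<Sum>m<k. c m j) * (x j::complex)) = (\<Sum>m<(k::nat). \<Sum>j<(d::nat). c m j * x j)"
  unfolding sum_distrib_right by (rule sum.swap)

lemma block_step:
  assumes eq: "\<forall>i<k*d. \<forall>j<q*d. Z i j + matmul E (k*d) Z i j = B i j"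
    and l: "l < k" and r: "r < q"
  shows "spec_norm d d (subblock d Z l r) \<le> spec_norm d d (subblock d B l r)
     + (\<Sum>m<k. spec_norm d d (subblock d E l m) * spec_norm d d (subblock d Z m r))"
proof (rule spec_least)
  show "0 \<le> spec_norm d d (subblock d B l r)
     + (\<Sum>m<k. spec_norm d d (subblock d E l m) * spec_norm d d (subblock d Z m r))"
    by (intro add_nonneg_nonneg sum_nonneg mult_nonneg_nonneg spec_nonneg)
  fix x
  have ent: "subblock d Z l r i j = subblock d B l r i j
      - (\<Sum>m<k. matmul (subblock d E l m) d (subblock d Z m r) i j)" if "i<d" "j<d" for i j
  proof -
    have "l*d+i < k*d" "r*d+j < q*d" using idx_lt that l r by auto
    then have "Z (l*d+i) (r*d+j) + matmul E (k*d) Z (l*d+i) (r*d+j) = B (l*d+i) (r*d+j)"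
      using eq by auto
    then show ?thesis unfolding matmul_blocks by (simp add: subblock_def algebra_simps)
  qed
  have "vnorm d (matvec d (subblock d Z l r) x) = vnorm d (\<lambda>i. matvec d (subblock d B l r) x i
      - (\<Sum>m<k. matvec d (subblock d E l m) (matvec d (subblock d Z m r) x) i))"
  proof (rule vnorm_cong)
    fix i assume i: "i < d"
    have "matvec d (subblock d Z l r) x i = (\<Sum>j<d. (subblock d B l r i j
      - (\<Sum>m<k. matmul (subblock d E l m) d (subblock d Z m r) i j)) * x j)"
      unfolding matvec_def using ent i by (intro sum.cong) auto
    also have "\<dots> = matvec d (subblock d B l r) x i
      - (\<Sum>m<k. matvec d (matmul (subblock d E l m) d (subblock d Z m r)) x i)"
      unfolding matvec_def left_diff_distrib sum_subtractf sum_swap_mult ..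
    finally show "matvec d (subblock d Z l r) x i = matvec d (subblock d B l r) x i
      - (\<Sum>m<k. matvec d (subblock d E l m) (matvec d (subblock d Z m r) x) i)"
      by (simp add: matvec_matmul)
  qed
  also have "\<dots> \<le> vnorm d (matvec d (subblock d B l r) x)
      + vnorm d (\<lambda>i. \<Sum>m<k. matvec d (subblock d E l m) (matvec d (subblock d Z m r) x) i)"
    by (rule vnorm_diff)
  also have "\<dots> \<le> spec_norm d d (subblock d B l r) * vnorm d x
      + (\<Sum>m<k. vnorm d (matvec d (subblock d E l m) (matvec d (subblock d Z m r) x)))"
    by (intro add_mono spec_apply vnorm_sum) simp
  also have "\<dots> \<le> spec_norm d d (subblock d B l r) * vnorm d x
      + (\<Sum>m<k. spec_norm d d (subblock d E l m) * spec_norm d d (subblock d Z m r) * vnorm d x)"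
  proof (intro add_left_mono sum_mono)
    fix m
    have "vnorm d (matvec d (subblock d E l m) (matvec d (subblock d Z m r) x))
       \<le> spec_norm d d (subblock d E l m) * vnorm d (matvec d (subblock d Z m r) x)"
      by (rule spec_apply)
    also have "\<dots> \<le> spec_norm d d (subblock d E l m) * (spec_norm d d (subblock d Z m r) * vnorm d x)"
      by (intro mult_left_mono spec_apply spec_nonneg)
    finally show "vnorm d (matvec d (subblock d E l m) (matvec d (subblock d Z m r) x))
       \<le> spec_norm d d (subblock d E l m) * spec_norm d d (subblock d Z m r) * vnorm d x"
      by (simp add: mult.assoc)
  qed
  also have "\<dots> = (spec_norm d d (subblock d B l r)
     + (\<Sum>m<k. spec_norm d d (subblock d E l m) * spec_norm d d (subblock d Z m r))) * vnorm d x"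
    by (simp only: distrib_right sum_distrib_right mult.assoc)
  finally show "vnorm d (matvec d (subblock d Z l r) x) \<le> (spec_norm d d (subblock d B l r)
     + (\<Sum>m<k. spec_norm d d (subblock d E l m) * spec_norm d d (subblock d Z m r))) * vnorm d x" .
qed

lemma block_core:
  assumes eq: "\<forall>i<k*d. \<forall>j<q*d. Z i j + matmul E (k*d) Z i j = B i j"
    and eb: "\<forall>m<k. (\<Sum>l<k. spec_norm d d (subblock d E l m)) \<le> e"
    and r: "r < q"
  shows "(\<Sum>l<k. spec_norm d d (subblock d Z l r)) \<le> (\<Sum>l<k. spec_norm d d (subblock d B l r))
     + e * (\<Sum>m<k. spec_norm d d (subblock d Z m r))"
proof -
  have "(\<Sum>l<k. spec_norm d d (subblock d Z l r)) \<le> (\<Sum>l<k. spec_norm d d (subblock d B l r)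
     + (\<Sum>m<k. spec_norm d d (subblock d E l m) * spec_norm d d (subblock d Z m r)))"
    by (intro sum_mono block_step[OF eq _ r]) auto
  also have "\<dots> = (\<Sum>l<k. spec_norm d d (subblock d B l r))
     + (\<Sum>m<k. (\<Sum>l<k. spec_norm d d (subblock d E l m)) * spec_norm d d (subblock d Z m r))"
    unfolding sum.distrib sum_distrib_right by (subst sum.swap) (rule refl)
  also have "\<dots> \<le> (\<Sum>l<k. spec_norm d d (subblock d B l r))
     + (\<Sum>m<k. e * spec_norm d d (subblock d Z m r))"
    using eb by (intro add_left_mono sum_mono mult_right_mono spec_nonneg) auto
  finally show ?thesis by (simp add: sum_distrib_left)
qed



lemma schur_row:
  assumes row: "(\<Sum>j<n. cmod (A i j)) \<le> c"
  shows "(cmod (matvec n A x i))\<^sup>2 \<le> c * (\<Sum>j<n. cmod (A i j) * (cmod (x j))\<^sup>2)"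
proof -
  define f where "f = (\<lambda>j. sqrt (cmod (A i j)))"
  define g where "g = (\<lambda>j. sqrt (cmod (A i j)) * cmod (x j))"
  have "cmod (matvec n A x i) \<le> (\<Sum>j<n. cmod (A i j) * cmod (x j))"
    unfolding matvec_def by (rule order_trans[OF norm_sum]) (simp add: norm_mult)
  also have "\<dots> = (\<Sum>j<n. \<bar>f j\<bar> * \<bar>g j\<bar>)"
    unfolding f_def g_def by (intro sum.cong refl) (simp add: abs_mult mult.assoc[symmetric])
  also have "\<dots> \<le> L2_set f {..<n} * L2_set g {..<n}" by (rule L2_set_mult_ineq)
  finally have h: "cmod (matvec n A x i) \<le> L2_set f {..<n} * L2_set g {..<n}" .
  have "(cmod (matvec n A x i))\<^sup>2 \<le> (L2_set f {..<n} * L2_set g {..<n})\<^sup>2"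
    by (rule power_mono[OF h]) simp
  also have "\<dots> = (\<Sum>j<n. cmod (A i j)) * (\<Sum>j<n. cmod (A i j) * (cmod (x j))\<^sup>2)"
    unfolding power_mult_distrib L2_set_def f_def g_def
    by (simp add: sum_nonneg power_mult_distrib)
  also have "\<dots> \<le> c * (\<Sum>j<n. cmod (A i j) * (cmod (x j))\<^sup>2)"
    by (intro mult_right_mono row sum_nonneg) auto
  finally show ?thesis .
qed

lemma schur:
  assumes row: "\<And>i. i<m \<Longrightarrow> (\<Sum>j<n. cmod (A i j)) \<le> c"
    and col: "\<And>j. j<n \<Longrightarrow> (\<Sum>i<m. cmod (A i j)) \<le> c"
    and c: "0 \<le> c"
  shows "spec_norm m n A \<le> c"
proof (rule spec_least[OF _ c])
  fix x
  have "(vnorm m (matvec n A x))\<^sup>2 = (\<Sum>i<m. (cmod (matvec n A x i))\<^sup>2)" by (rule vnorm_sq)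
  also have "\<dots> \<le> (\<Sum>i<m. c * (\<Sum>j<n. cmod (A i j) * (cmod (x j))\<^sup>2))"
    by (intro sum_mono schur_row row) auto
  also have "\<dots> = c * (\<Sum>j<n. (\<Sum>i<m. cmod (A i j)) * (cmod (x j))\<^sup>2)"
    by (simp add: sum_distrib_left[symmetric] sum_distrib_right) (rule disjI2, rule sum.swap)
  also have "\<dots> \<le> c * (\<Sum>j<n. c * (cmod (x j))\<^sup>2)"
    by (intro mult_left_mono c sum_mono mult_right_mono col) auto
  also have "\<dots> = c\<^sup>2 * (\<Sum>j<n. (cmod (x j))\<^sup>2)"
    by (simp add: sum_distrib_left power2_eq_square mult.assoc)
  also have "\<dots> = (c * vnorm n x)\<^sup>2"
    by (simp only: power_mult_distrib vnorm_sq)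
  finally show "vnorm m (matvec n A x) \<le> c * vnorm n x"
    by (rule power2_le_imp_le) (simp add: c vnorm_nonneg)
qed

lemma zero_diag_bound:
  assumes diag: "\<And>i. i<d \<Longrightarrow> A i i = 0"
    and off: "\<And>i j. i<d \<Longrightarrow> j<d \<Longrightarrow> i\<noteq>j \<Longrightarrow> cmod (A i j) \<le> \<nu>"
    and nu: "0 \<le> \<nu>" and dpos: "0 < d"
  shows "spec_norm d d A \<le> (real d - 1) * \<nu>"
proof -
  have False: "d \<noteq> 0" using dpos by simp
  have key: "(\<Sum>j<d. (if j = i then 0 else \<nu>)) = (real d - 1) * \<nu>" if "i<d" for i
  proof -
    have "(\<Sum>j<d. (if j = i then 0 else \<nu>)) = (\<Sum>j\<in>{..<d}-{i}. \<nu>)"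
      by (simp add: sum.If_cases Diff_eq Int_commute)
    also have "\<dots> = real (d - 1) * \<nu>" using that by simp
    finally show ?thesis using False by (simp add: of_nat_diff)
  qed
  show ?thesis
  proof (rule schur)
    show "0 \<le> (real d - 1) * \<nu>" using False nu by simp
    fix i assume i: "i<d"
    have "(\<Sum>j<d. cmod (A i j)) \<le> (\<Sum>j<d. (if j = i then 0 else \<nu>))"
      using diag off i by (intro sum_mono) auto
    then show "(\<Sum>j<d. cmod (A i j)) \<le> (real d - 1) * \<nu>" using key[OF i] by simp
    have "(\<Sum>j<d. cmod (A j i)) \<le> (\<Sum>j<d. (if j = i then 0 else \<nu>))"
      using diag off i by (intro sum_mono) auto
    then show "(\<Sum>j<d. cmod (A j i)) \<le> (real d - 1) * \<nu>" using key[OF i] by simp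
  qed
qed



definition idm :: "nat \<Rightarrow> nat \<Rightarrow> complex" where "idm i j = (if i = j then 1 else 0)"

lemma mm_assoc: "matmul (matmul A n B) p C = matmul A n (matmul B p C)"
  unfolding matmul_def
  by (intro ext) (simp add: sum_distrib_left sum_distrib_right mult.assoc sum.swap[of _ "{..<n}"])

lemma adj_adj[simp]: "adj (adj A) = A" by (simp add: adj_def)

lemma adj_mm: "adj (matmul A n B) = matmul (adj B) n (adj A)"
  unfolding adj_def matmul_def by (intro ext) (simp add: mult.commute)

lemma mm_cong:
  "(\<And>p. p<n \<Longrightarrow> A i p = A' i p) \<Longrightarrow> (\<And>p. p<n \<Longrightarrow> B p j = B' p j) \<Longrightarrow>
   matmul A n B i j = matmul A' n B' i j"
  unfolding matmul_def by (intro sum.cong) auto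

lemma mm_idR: "(\<And>p. p<n \<Longrightarrow> I p j = idm p j) \<Longrightarrow> j<n \<Longrightarrow> matmul A n I i j = A i j"
proof -
  assume h: "\<And>p. p<n \<Longrightarrow> I p j = idm p j" and j: "j<n"
  have "matmul A n I i j = (\<Sum>p<n. A i p * idm p j)" unfolding matmul_def using h by (intro sum.cong) auto
  also have "\<dots> = A i j" using j by (simp add: idm_def if_distrib cong: if_cong)
  finally show ?thesis .
qed

lemma mm_idL: "(\<And>p. p<n \<Longrightarrow> I i p = idm i p) \<Longrightarrow> i<n \<Longrightarrow> matmul I n A i j = A i j"
proof -
  assume h: "\<And>p. p<n \<Longrightarrow> I i p = idm i p" and i: "i<n"
  have "matmul I n A i j = (\<Sum>p<n. idm i p * A p j)" unfolding matmul_def using h by (intro sum.cong) auto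
  also have "\<dots> = (\<Sum>p<n. if i = p then A p j else 0)" by (intro sum.cong) (auto simp: idm_def)
  also have "\<dots> = A i j" using i by simp
  finally show ?thesis .
qed

lemma pinv_eq:
  fixes A H :: "nat \<Rightarrow> nat \<Rightarrow> complex" and m n :: nat
  defines "G \<equiv> matmul (adj A) m A"
  assumes GH: "\<And>i j. i<n \<Longrightarrow> j<n \<Longrightarrow> matmul G n H i j = idm i j"
    and HG: "\<And>i j. i<n \<Longrightarrow> j<n \<Longrightarrow> matmul H n G i j = idm i j"
  shows "pinv m n A = (\<lambda>i j. if i<n \<and> j<m then matmul H n (adj A) i j else 0)"
proof -
  define X' where "X' = matmul H n (adj A)"
  define X where "X = (\<lambda>i j. if i<n \<and> j<m then X' i j else 0)"
  have adjG: "adj G = G" unfolding G_def by (simp add: adj_mm)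
  have herm: "adj H i j = H i j" if "i<n" "j<n" for i j
  proof -
    have "adj H i j = matmul (adj H) n (matmul G n H) i j"
      using that GH by (intro mm_idR[symmetric]) auto
    also have "\<dots> = matmul (matmul (adj H) n G) n H i j" by (simp add: mm_assoc)
    also have "\<dots> = matmul idm n H i j"
    proof (rule mm_cong)
      fix p assume p: "p<n"
      have "matmul (adj H) n G i p = adj (matmul G n H) i p"
        by (simp add: adj_mm adjG)
      also have "\<dots> = idm i p" using GH[of p i] p that by (simp add: adj_def idm_def)
      finally show "matmul (adj H) n G i p = idm i p" .
    qed simp
    also have "\<dots> = H i j" using that by (intro mm_idL) auto
    finally show ?thesis .
  qed
  have s2: "matmul X m A i j = matmul H n G i j" if "i<n" for i j
  proof -
    have "matmul X m A i j = matmul X' m A i j" using that by (intro mm_cong) (auto simp: X_def)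
    then show ?thesis by (simp add: X'_def G_def mm_assoc)
  qed
  have P: "(\<forall>i j. \<not> (i < n \<and> j < m) \<longrightarrow> X i j = 0)
      \<and> mat_eq m n (matmul (matmul A n X) m A) A
      \<and> mat_eq n m (matmul (matmul X m A) n X) X
      \<and> mat_eq m m (adj (matmul A n X)) (matmul A n X)
      \<and> mat_eq n n (adj (matmul X m A)) (matmul X m A)"
  proof (intro conjI)
    show "\<forall>i j. \<not> (i < n \<and> j < m) \<longrightarrow> X i j = 0" by (simp add: X_def)
    show "mat_eq m n (matmul (matmul A n X) m A) A"
      unfolding mat_eq_def
    proof (intro allI impI)
      fix i j assume i: "i<m" and j: "j<n"
      have "matmul (matmul A n X) m A i j = matmul A n (matmul X m A) i j" by (simp add: mm_assoc)
      also have "\<dots> = A i j" using j s2 HG by (intro mm_idR) auto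
      finally show "matmul (matmul A n X) m A i j = A i j" .
    qed
    show "mat_eq n m (matmul (matmul X m A) n X) X"
      unfolding mat_eq_def
    proof (intro allI impI)
      fix i j assume i: "i<n" and j: "j<m"
      show "matmul (matmul X m A) n X i j = X i j" using i s2 HG by (intro mm_idL) auto
    qed
    show "mat_eq n n (adj (matmul X m A)) (matmul X m A)"
      unfolding mat_eq_def
    proof (intro allI impI)
      fix i j assume i: "i<n" and j: "j<n"
      show "adj (matmul X m A) i j = matmul X m A i j"
        using i j s2 HG by (simp add: adj_def idm_def)
    qed
    show "mat_eq m m (adj (matmul A n X)) (matmul A n X)"
      unfolding mat_eq_def
    proof (intro allI impI)
      fix i j assume i: "i<m" and j: "j<m"
      have AX: "matmul A n X a b = matmul A n X' a b" if "b<m" for a b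
        using that by (intro mm_cong) (auto simp: X_def)
      have "adj (matmul A n X) i j = adj (matmul A n X') i j"
        using AX[OF i] by (simp add: adj_def)
      also have "\<dots> = matmul (matmul A n (adj H)) n (adj A) i j"
        by (simp add: adj_mm X'_def)
      also have "\<dots> = matmul A n (matmul (adj H) n (adj A)) i j" by (simp add: mm_assoc)
      also have "\<dots> = matmul A n X' i j"
        unfolding X'_def
      proof (rule mm_cong)
        fix p assume p: "p<n"
        show "matmul (adj H) n (adj A) p j = matmul H n (adj A) p j"
          using p herm by (intro mm_cong) auto
      qed simp
      also have "\<dots> = matmul A n X i j" using AX[OF j] by simp
      finally show "adj (matmul A n X) i j = matmul A n X i j" .
    qed
  qed
  have U: "Y = X" if PY: "(\<forall>i j. \<not> (i < n \<and> j < m) \<longrightarrow> Y i j = 0)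
      \<and> mat_eq m n (matmul (matmul A n Y) m A) A
      \<and> mat_eq n m (matmul (matmul Y m A) n Y) Y
      \<and> mat_eq m m (adj (matmul A n Y)) (matmul A n Y)
      \<and> mat_eq n n (adj (matmul Y m A)) (matmul Y m A)" for Y
  proof (intro ext)
    fix i j
    have e1: "\<And>a b. a<m \<Longrightarrow> b<n \<Longrightarrow> matmul (matmul A n Y) m A a b = A a b"
      and e3: "\<And>a b. a<m \<Longrightarrow> b<m \<Longrightarrow> adj (matmul A n Y) a b = matmul A n Y a b"
      using PY unfolding mat_eq_def by auto
    have GY: "matmul G n Y a b = adj A a b" if "a<n" "b<m" for a b
    proof -
      have "adj A a b = adj (matmul (matmul A n Y) m A) a b"
        using e1[of b a] that by (simp add: adj_def)
      also have "\<dots> = matmul (adj A) m (adj (matmul A n Y)) a b" by (simp add: adj_mm)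
      also have "\<dots> = matmul (adj A) m (matmul A n Y) a b"
        using e3 that by (intro mm_cong) auto
      also have "\<dots> = matmul G n Y a b" by (simp add: G_def mm_assoc)
      finally show ?thesis by simp
    qed
    show "Y i j = X i j"
    proof (cases "i<n \<and> j<m")
      case True
      have "Y i j = matmul idm n Y i j" using True by (intro mm_idL[symmetric]) auto
      also have "\<dots> = matmul (matmul H n G) n Y i j"
        using True HG by (intro mm_cong) auto
      also have "\<dots> = matmul H n (matmul G n Y) i j" by (simp add: mm_assoc)
      also have "\<dots> = X' i j" unfolding X'_def using True GY by (intro mm_cong) auto
      finally show ?thesis using True by (simp add: X_def)
    next
      case False
      then show ?thesis using PY by (auto simp: X_def)
    qed
  qed
  have "pinv m n A = X"
    unfolding pinv_def by (rule the_equality, rule P, rule U, assumption)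
  then show ?thesis unfolding X_def X'_def .
qed



lemma inverse_exists:
  fixes G :: "nat \<Rightarrow> nat \<Rightarrow> complex"
  assumes inj: "\<And>v. (\<forall>i<n. matvec n G v i = 0) \<Longrightarrow> \<forall>i<n. v i = 0"
  shows "\<exists>H. (\<forall>i<n. \<forall>j<n. matmul G n H i j = idm i j) \<and> (\<forall>i<n. \<forall>j<n. matmul H n G i j = idm i j)"
proof -
  define Gm where "Gm = mat n n (\<lambda>(i,j). G i j)"
  have Gc: "Gm \<in> carrier_mat n n" by (simp add: Gm_def)
  have det: "Determinant.det Gm \<noteq> 0"
  proof
    assume "Determinant.det Gm = 0"
    then obtain v where v: "v \<in> carrier_vec n" "v \<noteq> 0\<^sub>v n" "Gm *\<^sub>v v = 0\<^sub>v n"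
      using det_0_iff_vec_prod_zero[OF Gc] by blast
    define vf where "vf = (\<lambda>i. v $ i)"
    have "\<forall>i<n. matvec n G vf i = 0"
    proof (intro allI impI)
      fix i assume i: "i<n"
      have "(Gm *\<^sub>v v) $ i = matvec n G vf i"
        using i v(1) by (simp add: Gm_def matvec_def vf_def scalar_prod_def atLeast0LessThan)
      then show "matvec n G vf i = 0" using v(3) i by simp
    qed
    then have "\<forall>i<n. vf i = 0" by (rule inj)
    then have "v = 0\<^sub>v n" using v(1) by (intro eq_vecI) (auto simp: vf_def)
    then show False using v(2) by simp
  qed
  define Hm where "Hm = (1 / Determinant.det Gm) \<cdot>\<^sub>m adj_mat Gm"
  have Ac: "adj_mat Gm \<in> carrier_mat n n" using adj_mat(1)[OF Gc] .
  have Hc: "Hm \<in> carrier_mat n n" using Ac by (simp add: Hm_def)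
  have GH: "Gm * Hm = 1\<^sub>m n"
    using det by (simp add: Hm_def mult_smult_distrib[OF Gc Ac] adj_mat(2)[OF Gc]) (rule eq_matI, auto)
  have HG: "Hm * Gm = 1\<^sub>m n"
    using det by (simp add: Hm_def mult_smult_assoc_mat[OF Ac Gc] adj_mat(3)[OF Gc]) (rule eq_matI, auto)
  define H where "H = (\<lambda>i j. Hm $$ (i,j))"
  show ?thesis
  proof (intro exI conjI allI impI)
    fix i j assume i: "i<n" and j: "j<n"
    have "(Gm * Hm) $$ (i,j) = matmul G n H i j"
      using i j Hc by (simp add: Gm_def H_def matmul_def scalar_prod_def atLeast0LessThan)
    then show "matmul G n H i j = idm i j" using GH i j by (simp add: idm_def)
    have "(Hm * Gm) $$ (i,j) = matmul H n G i j"
      using i j Hc by (simp add: Gm_def H_def matmul_def scalar_prod_def atLeast0LessThan)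
    then show "matmul H n G i j = idm i j" using HG i j by (simp add: idm_def)
  qed
qed



lemma divmod_blk: "0 < (d::nat) \<Longrightarrow> i < d \<Longrightarrow> (l*d+i) div d = l \<and> (l*d+i) mod d = i"
  by simp

lemma sel_sub:
  assumes "0<d" "i<d" "j<d"
  shows "subblock d (matmul (adj (sel_blocks d D ls)) L (sel_blocks d D ls')) l r i j
       = matmul (adj (blk d D (ls!l))) L (blk d D (ls'!r)) i j"
  using divmod_blk[OF assms(1,2), of l] divmod_blk[OF assms(1,3), of r]
  by (simp add: subblock_def matmul_def adj_def sel_blocks_def blk_def)

lemma coh_bound:
  assumes d: "0<d" and ab: "a<M" "b<M" "a\<noteq>b"
  shows "spec_norm d d (matmul (adj (blk d D a)) L (blk d D b)) \<le> real d * block_coherence L M d D"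
proof -
  define f where "f = (\<lambda>l r. spec_norm d d (matmul (adj (blk d D l)) L (blk d D r)) / real d)"
  define S where "S = {f l r | l r. l < M \<and> r < M \<and> r \<noteq> l}"
  have "S \<subseteq> (\<lambda>(l,r). f l r) ` ({..<M} \<times> {..<M})" unfolding S_def by auto
  then have fin: "finite S" by (rule finite_subset) simp
  have "f a b \<in> S" using ab unfolding S_def by auto
  then have "f a b \<le> Max (insert 0 S)" using fin by (intro Max_ge) auto
  then have "f a b \<le> block_coherence L M d D" unfolding block_coherence_def S_def f_def .
  then show ?thesis using d unfolding f_def by (simp add: field_simps)
qed

lemma sub_coh_bound:
  assumes ab: "a<M" "i<d" "j<d" "i\<noteq>j"
  shows "cmod (\<Sum>p<L. cnj (D p (a*d+i)) * D p (a*d+j)) \<le> sub_coherence L M d D"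
proof -
  define f where "f = (\<lambda>l a b. cmod (\<Sum>p<L. cnj (D p (l*d+a)) * D p (l*d+b)))"
  define S where "S = {f l a b | l a b. l < M \<and> a < d \<and> b < d \<and> b \<noteq> a}"
  have "S \<subseteq> (\<lambda>(l,a,b). f l a b) ` ({..<M} \<times> {..<d} \<times> {..<d})" unfolding S_def
  proof clarify
    fix l a b assume "l<M" "a<d" "b<d"
    then show "f l a b \<in> (\<lambda>(l,a,b). f l a b) ` ({..<M} \<times> {..<d} \<times> {..<d})"
      by (intro image_eqI[where x="(l,a,b)"]) auto
  qed
  then have fin: "finite S" by (rule finite_subset) simp
  have "f a i j \<in> S" using ab unfolding S_def by auto
  then have "f a i j \<le> Max (insert 0 S)" using fin by (intro Max_ge) auto
  then show ?thesis unfolding sub_coherence_def S_def f_def .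
qed

lemma sub_coh_nonneg: "0 \<le> sub_coherence L M d D"
proof -
  define f where "f = (\<lambda>l a b. cmod (\<Sum>p<L. cnj (D p (l*d+a)) * D p (l*d+b)))"
  define S where "S = {f l a b | l a b. l < M \<and> a < d \<and> b < d \<and> b \<noteq> a}"
  have "S \<subseteq> (\<lambda>(l,a,b). f l a b) ` ({..<M} \<times> {..<d} \<times> {..<d})" unfolding S_def
  proof clarify
    fix l a b assume "l<M" "a<d" "b<d"
    then show "f l a b \<in> (\<lambda>(l,a,b). f l a b) ` ({..<M} \<times> {..<d} \<times> {..<d})"
      by (intro image_eqI[where x="(l,a,b)"]) auto
  qed
  then have fin: "finite S" by (rule finite_subset) simp
  have "0 \<le> Max (insert 0 S)" using fin by (intro Max_ge) auto
  then show ?thesis unfolding sub_coherence_def S_def f_def .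
qed

lemma d_pos_of_coh: "block_coherence L M d D > 0 \<Longrightarrow> 0 < d"
proof (rule ccontr)
  assume h: "block_coherence L M d D > 0" and "\<not> 0 < d"
  then have "d = 0" by simp
  then have "block_coherence L M d D = Max (insert 0 {(0::real) | l r. l < M \<and> r < M \<and> r \<noteq> l})"
    by (simp add: block_coherence_def)
  also have "\<dots> \<le> 0"
    by (rule Max.boundedI) (auto intro: finite_subset[of _ "{0}"])
  finally show False using h by simp
qed

lemma unit_inner:
  assumes "vnorm L (\<lambda>p. D p c) = 1"
  shows "(\<Sum>p<L. cnj (D p c) * D p c) = 1"
proof -
  have "(\<Sum>p<L. (cmod (D p c))\<^sup>2) = 1"
    using assms unfolding vnorm_def by (simp add: sum_nonneg)
  then have "complex_of_real (\<Sum>p<L. (cmod (D p c))\<^sup>2) = 1" by simp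
  then have "(\<Sum>p<L. complex_of_real ((cmod (D p c))\<^sup>2)) = 1" by (simp only: of_real_sum)
  then show ?thesis unfolding complex_norm_square by (simp add: mult.commute)
qed

lemma E_mul:
  assumes "i < n"
  shows "matmul (\<lambda>a b. G a b - idm a b) n Z i j = matmul G n Z i j - Z i j"
proof -
  have "matmul (\<lambda>a b. G a b - idm a b) n Z i j = matmul G n Z i j - matmul idm n Z i j"
    unfolding matmul_def by (simp add: left_diff_distrib sum_subtractf)
  also have "matmul idm n Z i j = Z i j" using assms by (intro mm_idL) auto
  finally show ?thesis .
qed

lemma spec_zero: "spec_norm d d (\<lambda>_ _. 0) = 0"
  using spec_least[of d d "\<lambda>_ _. 0" 0] spec_nonneg[of d d "\<lambda>_ _. 0"]
  by (simp add: matvec_def vnorm_zero_vec)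



theorem theorem3:
  fixes R M d k :: nat and D :: "nat \<Rightarrow> nat \<Rightarrow> complex" and \<Lambda>0 :: "nat set"
  assumes unit_cols: "\<forall>j < M * d. vnorm (R * d) (\<lambda>i. D i j) = 1"
    and spark: "\<forall>g. block_sparse M d (2 * k) g \<and> (\<exists>j < M * d. g j \<noteq> 0)
                  \<longrightarrow> (\<exists>i < R * d. matvec (M * d) D g i \<noteq> 0)"
    and muB_pos: "block_coherence (R * d) M d D > 0"
    and bound: "real (k * d) < 1 / 2 * (1 / block_coherence (R * d) M d D + real d
                  - (real d - 1) * sub_coherence (R * d) M d D / block_coherence (R * d) M d D)"
    and Lam: "\<Lambda>0 \<subseteq> {..<M}" "card \<Lambda>0 = k"
  shows "rho_c k (M - k) d
           (matmul (pinv (R * d) (k * d) (sel_blocks d D (sorted_list_of_set \<Lambda>0))) (R * d)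
                   (sel_blocks d D (sorted_list_of_set ({..<M} - \<Lambda>0)))) < 1"
proof -
  define ls0 where "ls0 = sorted_list_of_set \<Lambda>0"
  define ls1 where "ls1 = sorted_list_of_set ({..<M} - \<Lambda>0)"
  define A0 where "A0 = sel_blocks d D ls0"
  define Ab where "Ab = sel_blocks d D ls1"
  define mu where "mu = block_coherence (R * d) M d D"
  define nu where "nu = sub_coherence (R * d) M d D"
  define G where "G = matmul (adj A0) (R * d) A0"
  define E where "E = (\<lambda>a b. G a b - idm a b)"
  define B where "B = matmul (adj A0) (R * d) Ab"
  define e where "e = (real d - 1) * nu + (real k - 1) * real d * mu"
  have dpos: "0 < d" using d_pos_of_coh muB_pos by blast
  have mupos: "0 < mu" using muB_pos by (simp add: mu_def)
  have nunn: "0 \<le> nu" by (simp add: nu_def sub_coh_nonneg)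
  have fin0: "finite \<Lambda>0" using Lam(1) finite_subset by blast
  have ls0_set: "set ls0 = \<Lambda>0" using fin0 by (simp add: ls0_def)
  have ls0_len: "length ls0 = k" using Lam(2) by (simp add: ls0_def)
  have ls0_dist: "distinct ls0" by (simp add: ls0_def)
  have ls1_set: "set ls1 = {..<M} - \<Lambda>0" by (simp add: ls1_def)
  have ls1_len: "length ls1 = M - k"
    using Lam fin0 by (simp add: ls1_def card_Diff_subset)
  have ls0_in: "ls0!l \<in> \<Lambda>0 \<and> ls0!l < M" if "l<k" for l
    using nth_mem[of l ls0] that ls0_len ls0_set Lam(1) by auto
  have ls1_in: "ls1!r \<notin> \<Lambda>0 \<and> ls1!r < M" if "r<M-k" for r
    using nth_mem[of r ls1] that ls1_len ls1_set by auto

  have arith: "real k * real d * mu + e < 1"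
  proof -
    have "2*mu*real(k*d) < 2*mu*(1 / 2 * (1 / mu + real d - (real d - 1) * nu / mu))"
      using bound mupos unfolding mu_def nu_def by (intro mult_strict_left_mono) auto
    also have "2*mu*(1 / 2 * (1 / mu + real d - (real d - 1) * nu / mu)) = 1 + real d * mu - (real d - 1) * nu"
      using mupos by (simp add: field_simps)
    finally show ?thesis by (simp add: e_def algebra_simps)
  qed
  have kdmu: "0 \<le> real k * real d * mu" using mupos by simp
  have e1: "e < 1" using arith kdmu by linarith

  have Gsub: "subblock d G l m i j = (\<Sum>p<R*d. cnj (D p (ls0!l*d+i)) * D p (ls0!m*d+j))"
    if "i<d" "j<d" for l m i j
    unfolding G_def A0_def using sel_sub[OF dpos that] by (simp add: matmul_def adj_def blk_def)
  have Eoff: "spec_norm d d (subblock d E l m) \<le> real d * mu" if "l<k" "m<k" "l\<noteq>m" for l m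
  proof -
    have "spec_norm d d (subblock d E l m) = spec_norm d d (matmul (adj (blk d D (ls0!l))) (R*d) (blk d D (ls0!m)))"
    proof (rule spec_cong)
      fix i j assume ij: "i<d" "j<d"
      have "l*d+i \<noteq> m*d+j" using divmod_blk[OF dpos ij(1), of l] divmod_blk[OF dpos ij(2), of m] that
        by metis
      then have "subblock d E l m i j = subblock d G l m i j"
        by (simp add: E_def subblock_def idm_def)
      then show "subblock d E l m i j = matmul (adj (blk d D (ls0!l))) (R*d) (blk d D (ls0!m)) i j"
        using sel_sub[OF dpos ij] by (simp add: G_def A0_def)
    qed
    also have "\<dots> \<le> real d * mu" unfolding mu_def
      using ls0_in that nth_eq_iff_index_eq[OF ls0_dist, of l m] ls0_len
      by (intro coh_bound dpos) auto
    finally show ?thesis .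
  qed
  have Ediag: "spec_norm d d (subblock d E m m) \<le> (real d - 1) * nu" if "m<k" for m
  proof (rule zero_diag_bound[OF _ _ nunn dpos])
    fix i assume i: "i<d"
    have "ls0!m*d+i < M*d" using ls0_in[OF that] i by (intro idx_lt) auto
    then have "(\<Sum>p<R*d. cnj (D p (ls0!m*d+i)) * D p (ls0!m*d+i)) = 1"
      using unit_cols by (intro unit_inner) auto
    then show "subblock d E m m i i = 0"
      using Gsub[OF i i, of m m] by (simp add: E_def subblock_def idm_def)
  next
    fix i j assume ij: "i<d" "j<d" "i\<noteq>j"
    have "l*d+i \<noteq> l*d+j" for l using ij by simp
    then have "subblock d E m m i j = subblock d G m m i j"
      by (simp add: E_def subblock_def idm_def)
    then show "cmod (subblock d E m m i j) \<le> nu"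
      using Gsub[OF ij(1,2), of m m] sub_coh_bound[where a="ls0!m" and L="R*d" and D=D and M=M and d=d] ls0_in[OF that] ij
      by (simp add: nu_def)
  qed
  have eb: "\<forall>m<k. (\<Sum>l<k. spec_norm d d (subblock d E l m)) \<le> e"
  proof (intro allI impI)
    fix m assume m: "m<k"
    have "(\<Sum>l<k. spec_norm d d (subblock d E l m)) \<le> (\<Sum>l<k. if l = m then (real d - 1) * nu else real d * mu)"
      using Ediag Eoff m by (intro sum_mono) auto
    also have "\<dots> = (real d - 1) * nu + (\<Sum>l\<in>{..<k}-{m}. real d * mu)"
      using m by (subst sum.remove[of _ m]) auto
    also have "\<dots> = e" using m by (simp add: e_def of_nat_diff)
    finally show "(\<Sum>l<k. spec_norm d d (subblock d E l m)) \<le> e" .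
  qed
  have bb: "(\<Sum>l<k. spec_norm d d (subblock d B l r)) \<le> real k * real d * mu" if r: "r<M-k" for r
  proof -
    have "(\<Sum>l<k. spec_norm d d (subblock d B l r)) \<le> (\<Sum>l<k. real d * mu)"
    proof (intro sum_mono)
      fix l assume l: "l \<in> {..<k}"
      have "spec_norm d d (subblock d B l r) = spec_norm d d (matmul (adj (blk d D (ls0!l))) (R*d) (blk d D (ls1!r)))"
        by (rule spec_cong) (simp add: B_def A0_def Ab_def sel_sub[OF dpos])
      also have "\<dots> \<le> real d * mu" unfolding mu_def
        using ls0_in[of l] ls1_in[OF r] l by (intro coh_bound dpos) auto
      finally show "spec_norm d d (subblock d B l r) \<le> real d * mu" .
    qed
    then show ?thesis by simp
  qed
  have inj: "\<forall>i<k*d. v i = 0" if hv: "\<forall>i<k*d. matvec (k*d) G v i = 0" for v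
  proof -
    define Zv where "Zv = (\<lambda>i (j::nat). if j = 0 then v i else (0::complex))"
    have eqv: "\<forall>i<k*d. \<forall>j<1*d. Zv i j + matmul E (k*d) Zv i j = (\<lambda>_ _. 0) i j"
    proof (intro allI impI)
      fix i j assume i: "i<k*d" and j: "j<1*d"
      have "matmul G (k*d) Zv i j = (if j = 0 then matvec (k*d) G v i else 0)"
        by (simp add: matmul_def matvec_def Zv_def)
      then have "matmul G (k*d) Zv i j = 0" using hv i by simp
      then show "Zv i j + matmul E (k*d) Zv i j = (\<lambda>_ _. 0) i j"
        unfolding E_def using E_mul[OF i] by simp
    qed
    define S0 where "S0 = (\<Sum>l<k. spec_norm d d (subblock d Zv l 0))"
    have "S0 \<le> (\<Sum>l<k. spec_norm d d (subblock d (\<lambda>_ _. 0) l 0)) + e * S0"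
      unfolding S0_def by (rule block_core[OF eqv eb]) simp
    then have le: "S0 \<le> e * S0" by (simp add: subblock_def spec_zero)
    have S0nn: "0 \<le> S0" unfolding S0_def by (intro sum_nonneg spec_nonneg)
    have "S0 = 0"
    proof (rule ccontr)
      assume "S0 \<noteq> 0"
      then have "S0 > 0" using S0nn by simp
      then have "e * S0 < 1 * S0" using e1 by (intro mult_strict_right_mono) auto
      then show False using le by simp
    qed
    then have zero: "spec_norm d d (subblock d Zv l 0) = 0" if "l<k" for l
      using that unfolding S0_def by (subst (asm) sum_nonneg_eq_0_iff) (auto intro: spec_nonneg)
    show ?thesis
    proof (intro allI impI)
      fix i assume i: "i<k*d"
      define l where "l = i div d"
      define t where "t = i mod d"
      have l: "l<k" using i by (simp add: l_def less_mult_imp_div_less)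
      have t: "t<d" using dpos by (simp add: t_def)
      have it: "l*d+t = i" by (simp add: l_def t_def)
      define e0 where "e0 = (\<lambda>j::nat. if j = 0 then 1 else (0::complex))"
      have "vnorm d (matvec d (subblock d Zv l 0) e0) \<le> spec_norm d d (subblock d Zv l 0) * vnorm d e0"
        by (rule spec_apply)
      then have "vnorm d (matvec d (subblock d Zv l 0) e0) = 0"
        using zero[OF l] vnorm_nonneg[of d "matvec d (subblock d Zv l 0) e0"] by simp
      then have "matvec d (subblock d Zv l 0) e0 t = 0" using t by (simp add: vnorm_eq_0)
      moreover have "matvec d (subblock d Zv l 0) e0 t = (\<Sum>j<d. if j = 0 then subblock d Zv l 0 t j else 0)"
        unfolding matvec_def by (intro sum.cong) (auto simp: e0_def)
      moreover have "(\<Sum>j<d. if j = 0 then subblock d Zv l 0 t j else 0) = v i"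
        using dpos it by (simp add: subblock_def Zv_def)
      ultimately show "v i = 0" by simp
    qed
  qed
  obtain H where GH: "\<forall>i<k*d. \<forall>j<k*d. matmul G (k*d) H i j = idm i j"
    and HG: "\<forall>i<k*d. \<forall>j<k*d. matmul H (k*d) G i j = idm i j"
    using inverse_exists[of "k*d" G] inj by blast
  have pX: "pinv (R*d) (k*d) A0 = (\<lambda>i j. if i<k*d \<and> j<R*d then matmul H (k*d) (adj A0) i j else 0)"
    by (rule pinv_eq) (use GH HG in \<open>auto simp: G_def\<close>)
  define Z where "Z = matmul (pinv (R*d) (k*d) A0) (R*d) Ab"
  have eqZ: "\<forall>i<k*d. \<forall>j<(M-k)*d. Z i j + matmul E (k*d) Z i j = B i j"
  proof (intro allI impI)
    fix i j assume i: "i<k*d" and j: "j<(M-k)*d"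
    have "matmul G (k*d) Z i j = matmul G (k*d) (matmul (matmul H (k*d) (adj A0)) (R*d) Ab) i j"
    proof (rule mm_cong)
      fix p assume p: "p<k*d"
      show "Z p j = matmul (matmul H (k*d) (adj A0)) (R*d) Ab p j"
        unfolding Z_def using p by (intro mm_cong) (auto simp: pX)
    qed simp
    also have "\<dots> = matmul (matmul (matmul G (k*d) H) (k*d) (adj A0)) (R*d) Ab i j"
      by (simp add: mm_assoc)
    also have "\<dots> = matmul (adj A0) (R*d) Ab i j"
      using i GH by (intro mm_cong mm_idL) auto
    finally have "matmul G (k*d) Z i j = B i j" by (simp add: B_def)
    then show "Z i j + matmul E (k*d) Z i j = B i j"
      unfolding E_def using E_mul[OF i] by simp
  qed
  have Sr: "(\<Sum>l<k. spec_norm d d (subblock d Z l r)) < 1" if r: "r < M-k" for r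
  proof -
    define S where "S = (\<Sum>l<k. spec_norm d d (subblock d Z l r))"
    have "S \<le> (\<Sum>l<k. spec_norm d d (subblock d B l r)) + e * S"
      unfolding S_def by (rule block_core[OF eqZ eb r])
    then have h: "S * (1 - e) \<le> real k * real d * mu" using bb[OF r] by (simp add: algebra_simps)
    show ?thesis unfolding S_def[symmetric]
    proof (rule ccontr)
      assume "\<not> S < 1"
      then have "1 * (1 - e) \<le> S * (1 - e)" using e1 by (intro mult_right_mono) auto
      then show False using h arith by simp
    qed
  qed
  have "rho_c k (M - k) d Z < 1"
    unfolding rho_c_def
  proof (subst Max_less_iff)
    show "finite (insert 0 {\<Sum>l<k. spec_norm d d (subblock d Z l r) |r. r < M - k})" by simp
    show "\<forall>a\<in>insert 0 {\<Sum>l<k. spec_norm d d (subblock d Z l r) |r. r < M - k}. a < 1"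
      using Sr by auto
  qed simp
  then show ?thesis unfolding Z_def A0_def Ab_def ls0_def ls1_def .
qed

end
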